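(* Let $f:\{0,1\}^n \to \{0,1\}$ have degree $d=\deg(f)$, and suppose that $M_1,\dots,M_\ell \subseteq [n]$ are pairwise disjoint sets such that for each $i$ the monomial $\prod_{j\in M_i} x_j$ has non-zero coefficient in the multilinear polynomial of $f$ and $|M_i| = d$. Let $M=\bigcup_{i=1}^\ell M_i$. Then for every assignment $\alpha: M \to \{0,1\}$, the restricted function $f_\alpha:\{0,1\}^{[n]\setminus M}\to\{0,1\}$ satisfies $$\mathrm{bs}(f_\alpha) \le \mathrm{bs}(f) - \ell.$$ In particular, $\ell \le \mathrm{bs}(f)$.
   Context: Every $f:\{0,1\}^n\to\{0,1\}$ agrees on $\{0,1\}^n$ with a unique multilinear real polynomial; $\deg(f)$ is its degree, and a monomial "of $f$" is one with non-zero coefficient in it. For $H\subseteq[n]$ and $\alpha:H\to\{0,1\}$, $f_\alpha$ denotes the function of the remaining variables obtained by setting $x_h=\alpha(h)$ for $h\in H$. For $x\in\{0,1\}^n$ and $B\subseteq[n]$, $x^B$ is $x$ with all bits in $B$ flipped. The block sensitivity $\mathrm{bs}_x(f)$ at $x$ is the maximum number $b$ of pairwise disjoint sets $B_1,\dots,B_b\subseteq[n]$ with $f(x^{B_j})\ne f(x)$ for all $j$, and $\mathrm{bs}(f)=\max_x \mathrm{bs}_x(f)$ (for a function of zero variables, $\mathrm{bs}=0$). *)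

theory Defs
  imports Complex_Main
begin

text \<open>A Boolean function on the variable set V (finite set of indices) is modelled as
  f :: (nat \<Rightarrow> bool) \<Rightarrow> bool; only inputs in bool_inputs V (all variables outside V are
  False) are relevant.\<close>

definition bool_inputs :: "nat set \<Rightarrow> (nat \<Rightarrow> bool) set" where
  "bool_inputs V = {x. \<forall>j. j \<notin> V \<longrightarrow> \<not> x j}"

definition is_multilinear_rep :: "nat set \<Rightarrow> ((nat \<Rightarrow> bool) \<Rightarrow> bool) \<Rightarrow> (nat set \<Rightarrow> real) \<Rightarrow> bool" where
  "is_multilinear_rep V f c \<longleftrightarrow>
     (\<forall>S. \<not> S \<subseteq> V \<longrightarrow> c S = 0) \<and>
     (\<forall>x \<in> bool_inputs V. of_bool (f x) = (\<Sum>S\<in>Pow V. c S * (\<Prod>j\<in>S. of_bool (x j))))"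

text \<open>The (unique) multilinear polynomial of f: coefficient of the monomial prod_{j in S} x_j.\<close>
definition ml_coeff :: "nat set \<Rightarrow> ((nat \<Rightarrow> bool) \<Rightarrow> bool) \<Rightarrow> nat set \<Rightarrow> real" where
  "ml_coeff V f = (THE c. is_multilinear_rep V f c)"

definition bf_degree :: "nat set \<Rightarrow> ((nat \<Rightarrow> bool) \<Rightarrow> bool) \<Rightarrow> nat" where
  "bf_degree V f = Max (insert 0 {card S | S. S \<subseteq> V \<and> ml_coeff V f S \<noteq> 0})"

definition flip :: "(nat \<Rightarrow> bool) \<Rightarrow> nat set \<Rightarrow> nat \<Rightarrow> bool" where
  "flip x B = (\<lambda>j. if j \<in> B then \<not> x j else x j)"

definition bs_at :: "nat set \<Rightarrow> ((nat \<Rightarrow> bool) \<Rightarrow> bool) \<Rightarrow> (nat \<Rightarrow> bool) \<Rightarrow> nat" where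
  "bs_at V f x = Max {b. \<exists>B :: nat \<Rightarrow> nat set.
      (\<forall>i<b. B i \<subseteq> V \<and> f (flip x (B i)) \<noteq> f x) \<and>
      (\<forall>i<b. \<forall>k<b. i \<noteq> k \<longrightarrow> B i \<inter> B k = {})}"

definition bs :: "nat set \<Rightarrow> ((nat \<Rightarrow> bool) \<Rightarrow> bool) \<Rightarrow> nat" where
  "bs V f = Max (bs_at V f ` bool_inputs V)"

definition restrict_bf :: "((nat \<Rightarrow> bool) \<Rightarrow> bool) \<Rightarrow> nat set \<Rightarrow> (nat \<Rightarrow> bool) \<Rightarrow> (nat \<Rightarrow> bool) \<Rightarrow> bool" where
  "restrict_bf f H \<alpha> = (\<lambda>x. f (\<lambda>j. if j \<in> H then \<alpha> j else x j))"

end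

theory Submission
  imports Defs
begin

lemma altsum:
  fixes z :: "nat \<Rightarrow> bool"
  assumes S: "finite S" and R: "finite R"
  shows "(\<Sum>T\<in>Pow S. (-1)^card T * (\<Prod>j\<in>R. of_bool (flip z T j) :: real))
       = (if S \<subseteq> R then (\<Prod>j\<in>S. if z j then 1 else -1) * (\<Prod>j\<in>R-S. of_bool (z j)) else 0)"
proof -
  define k where "k T j = (if j \<in> R then of_bool (flip z T j) else (1::real))" for T j
  define g where "g j = - (if j \<in> R then of_bool (\<not> z j) else (1::real))" for j
  define h where "h j = (if j \<in> R then of_bool (z j) else (1::real))" for j
  define Q where "Q = (\<Prod>j\<in>R-S. of_bool (z j) :: real)"
  have eq: "(-1)^card T * (\<Prod>j\<in>R. of_bool (flip z T j)) = (\<Prod>j\<in>T. g j) * (\<Prod>j\<in>S-T. h j) * Q"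
    if T: "T \<subseteq> S" for T
  proof -
    have fT: "finite T" using T S finite_subset by blast
    have "(\<Prod>j\<in>R. of_bool (flip z T j)) = (\<Prod>j\<in>R\<inter>S. of_bool (flip z T j)) * (\<Prod>j\<in>R-S. of_bool (flip z T j) :: real)"
      using R by (metis Int_Diff_disjoint Un_Int_eq(1) finite_Int finite_Diff inf_sup_absorb prod.union_disjoint Int_Diff_Un)
    also have "(\<Prod>j\<in>R-S. of_bool (flip z T j) :: real) = Q"
      unfolding Q_def using T by (intro prod.cong) (auto simp: flip_def)
    also have "(\<Prod>j\<in>R\<inter>S. of_bool (flip z T j)) = (\<Prod>j\<in>S. k T j)"
      unfolding k_def using S by (simp add: prod.If_cases Int_commute)
    also have "(\<Prod>j\<in>S. k T j) = (\<Prod>j\<in>T. k T j) * (\<Prod>j\<in>S-T. k T j)"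
      using S T by (metis prod.subset_diff mult.commute)
    also have "(\<Prod>j\<in>S-T. k T j) = (\<Prod>j\<in>S-T. h j)"
      unfolding k_def h_def by (intro prod.cong) (auto simp: flip_def)
    also have "(-1)^card T * (\<Prod>j\<in>T. k T j) = (\<Prod>j\<in>T. g j)"
    proof -
      have "(\<Prod>j\<in>T. g j) = (\<Prod>j\<in>T. (-1) * k T j)"
        unfolding k_def g_def by (intro prod.cong) (auto simp: flip_def)
      also have "\<dots> = (-1)^card T * (\<Prod>j\<in>T. k T j)"
        by (simp only: prod.distrib prod_constant)
      finally show ?thesis by simp
    qed
    ultimately show ?thesis by (simp add: algebra_simps)
  qed
  have "(\<Sum>T\<in>Pow S. (-1)^card T * (\<Prod>j\<in>R. of_bool (flip z T j) :: real))
       = (\<Sum>T\<in>Pow S. (\<Prod>j\<in>T. g j) * (\<Prod>j\<in>S-T. h j)) * Q"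
    by (simp add: eq sum_distrib_right)
  also have "(\<Sum>T\<in>Pow S. (\<Prod>j\<in>T. g j) * (\<Prod>j\<in>S-T. h j)) = (\<Prod>j\<in>S. g j + h j)"
    using prod_add[OF S, of g h] by simp
  also have "(\<Prod>j\<in>S. g j + h j) = (if S \<subseteq> R then (\<Prod>j\<in>S. if z j then 1 else -1) else 0)"
  proof (cases "S \<subseteq> R")
    case True
    then show ?thesis unfolding g_def h_def by (auto intro!: prod.cong)
  next
    case False
    then obtain j where "j \<in> S" "j \<notin> R" by blast
    then show ?thesis using S False unfolding g_def h_def
      by (auto intro!: prod_zero)
  qed
  finally show ?thesis unfolding Q_def by simp
qed


lemma rep_exists: "finite V \<Longrightarrow> \<exists>c. is_multilinear_rep V f c"
proof (induction V arbitrary: f rule: finite_induct)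
  case empty
  have bi: "bool_inputs {} = {\<lambda>_. False}" by (auto simp: bool_inputs_def)
  show ?case
    by (rule exI[of _ "\<lambda>S. if S = {} then of_bool (f (\<lambda>_. False)) else 0"])
       (auto simp: is_multilinear_rep_def bi)
next
  case (insert a V)
  define f0 where "f0 x = f (x(a := False))" for x
  define f1 where "f1 x = f (x(a := True))" for x
  obtain c0 where c0: "is_multilinear_rep V f0 c0" using insert.IH by blast
  obtain c1 where c1: "is_multilinear_rep V f1 c1" using insert.IH by blast
  define c where "c S = (if a \<in> S then c1 (S - {a}) - c0 (S - {a}) else c0 S)" for S
  have "is_multilinear_rep (insert a V) f c"
    unfolding is_multilinear_rep_def
  proof (intro conjI allI impI ballI)
    fix S assume "\<not> S \<subseteq> insert a V"
    then have "\<not> S \<subseteq> V" "a \<in> S \<Longrightarrow> \<not> S - {a} \<subseteq> V" by auto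
    then show "c S = 0" using c0 c1 unfolding c_def is_multilinear_rep_def by auto
  next
    fix x assume x: "x \<in> bool_inputs (insert a V)"
    let ?P = "\<lambda>S. (\<Prod>j\<in>S. of_bool (x j) :: real)"
    have x0: "x(a := False) \<in> bool_inputs V"
      using x by (auto simp: bool_inputs_def)
    have PV: "(\<Prod>j\<in>S. of_bool ((x(a := b)) j) :: real) = ?P S" if "S \<in> Pow V" for S b
      using that insert.hyps by (intro prod.cong) auto
    have e0: "of_bool (f (x(a:=False))) = (\<Sum>S\<in>Pow V. c0 S * ?P S)"
    proof -
      have "of_bool (f0 (x(a:=False))) = (\<Sum>S\<in>Pow V. c0 S * (\<Prod>j\<in>S. of_bool ((x(a := False)) j)))"
        using c0 x0 unfolding is_multilinear_rep_def by blast
      also have "\<dots> = (\<Sum>S\<in>Pow V. c0 S * ?P S)" by (intro sum.cong refl) (metis PV)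
      finally show ?thesis by (simp add: f0_def)
    qed
    have e1: "of_bool (f (x(a:=True))) = (\<Sum>S\<in>Pow V. c1 S * ?P S)"
    proof -
      have "of_bool (f1 (x(a:=False))) = (\<Sum>S\<in>Pow V. c1 S * (\<Prod>j\<in>S. of_bool ((x(a := False)) j)))"
        using c1 x0 unfolding is_multilinear_rep_def by blast
      also have "\<dots> = (\<Sum>S\<in>Pow V. c1 S * ?P S)" by (intro sum.cong refl) (metis PV)
      finally show ?thesis by (simp add: f1_def)
    qed
    have fin: "finite (Pow V)" using insert.hyps by simp
    have disj: "Pow V \<inter> insert a ` Pow V = {}" using insert.hyps by auto
    have inj: "inj_on (insert a) (Pow V)" using insert.hyps
      by (auto simp: inj_on_def)
    have "(\<Sum>S\<in>Pow (insert a V). c S * ?P S)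
        = (\<Sum>S\<in>Pow V. c S * ?P S) + (\<Sum>S\<in>insert a ` Pow V. c S * ?P S)"
      unfolding Pow_insert using fin disj by (simp add: sum.union_disjoint)
    also have "(\<Sum>S\<in>insert a ` Pow V. c S * ?P S) = (\<Sum>S\<in>Pow V. c (insert a S) * ?P (insert a S))"
      using inj by (simp add: sum.reindex)
    also have "\<dots> = (\<Sum>S\<in>Pow V. of_bool (x a) * ((c1 S - c0 S) * ?P S))"
    proof (intro sum.cong refl)
      fix S assume S: "S \<in> Pow V"
      then have "a \<notin> S" using insert.hyps by auto
      moreover have "finite S" using S insert.hyps finite_subset by auto
      ultimately show "c (insert a S) * ?P (insert a S) = of_bool (x a) * ((c1 S - c0 S) * ?P S)"
        unfolding c_def by simp
    qed
    also have "(\<Sum>S\<in>Pow V. c S * ?P S) = (\<Sum>S\<in>Pow V. c0 S * ?P S)"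
      using insert.hyps by (intro sum.cong refl) (auto simp: c_def)
    finally have "(\<Sum>S\<in>Pow (insert a V). c S * ?P S) = of_bool (f (x(a:=False))) + of_bool (x a) * (of_bool (f (x(a:=True))) - of_bool (f (x(a:=False))))"
      by (simp add: e0 e1 sum_distrib_left sum_subtractf algebra_simps)
    also have "\<dots> = of_bool (f x)"
    proof (cases "x a")
      case True
      then have "x(a := True) = x" by (simp add: fun_upd_idem)
      then show ?thesis using True by simp
    next
      case False
      then have "x(a := False) = x" by (simp add: fun_upd_idem)
      then show ?thesis using False by simp
    qed
    finally show "of_bool (f x) = (\<Sum>S\<in>Pow (insert a V). c S * ?P S)" by simp
  qed
  then show ?case by blast
qed

lemma rep_unique:
  assumes V: "finite V" and c: "is_multilinear_rep V f c" and c': "is_multilinear_rep V f c'"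
  shows "c = c'"
proof -
  define d where "d S = c S - c' S" for S
  have dsum: "(\<Sum>S\<in>Pow V. d S * (\<Prod>j\<in>S. of_bool (x j))) = 0" if "x \<in> bool_inputs V" for x
    using c c' that unfolding is_multilinear_rep_def d_def
    by (simp add: algebra_simps sum_subtractf)
  have "d S = 0" if "S \<subseteq> V" for S
    using that
  proof (induction "card S" arbitrary: S rule: less_induct)
    case less
    have fS: "finite S" using less.prems V finite_subset by auto
    have xin: "(\<lambda>j. j \<in> S) \<in> bool_inputs V" using less.prems by (auto simp: bool_inputs_def)
    have pr: "(\<Prod>j\<in>R. of_bool (j \<in> S) :: real) = of_bool (R \<subseteq> S)" if "R \<in> Pow V" for R
    proof -
      have "finite R" using that V finite_subset by auto
      then show ?thesis by (induction R rule: finite_induct) auto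
    qed
    have "0 = (\<Sum>R\<in>Pow V. d R * of_bool (R \<subseteq> S))"
    proof -
      have "(\<Sum>R\<in>Pow V. d R * (\<Prod>j\<in>R. of_bool (j\<in>S))) = (\<Sum>R\<in>Pow V. d R * of_bool (R\<subseteq>S))"
        by (intro sum.cong refl) (simp add: pr)
      then show ?thesis using dsum[OF xin] by simp
    qed
    also have "\<dots> = (\<Sum>R\<in>Pow S. d R)"
    proof -
      have "(\<Sum>R\<in>Pow V. d R * of_bool (R \<subseteq> S)) = (\<Sum>R\<in>Pow V. if R \<subseteq> S then d R else 0)"
        by (intro sum.cong) auto
      also have "\<dots> = (\<Sum>R\<in>{R\<in>Pow V. R \<subseteq> S}. d R)"
        by (subst sum.inter_filter) (use V in auto)
      also have "{R\<in>Pow V. R \<subseteq> S} = Pow S" using less.prems by auto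
      finally show ?thesis .
    qed
    also have "\<dots> = d S + (\<Sum>R\<in>Pow S - {S}. d R)"
      using fS by (simp add: sum.remove[of "Pow S" S])
    also have "(\<Sum>R\<in>Pow S - {S}. d R) = 0"
    proof (intro sum.neutral ballI)
      fix R assume R: "R \<in> Pow S - {S}"
      then have "R \<subset> S" by auto
      then have "card R < card S" using fS psubset_card_mono by blast
      then show "d R = 0" using less.hyps R less.prems by auto
    qed
    finally show ?case by simp
  qed
  moreover have "d S = 0" if "\<not> S \<subseteq> V" for S
    using that c c' unfolding is_multilinear_rep_def d_def by auto
  ultimately show ?thesis unfolding d_def by (metis eq_iff_diff_eq_0 ext)
qed

lemma ml_coeff_rep: "finite V \<Longrightarrow> is_multilinear_rep V f (ml_coeff V f)"
  unfolding ml_coeff_def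
  by (rule theI'[of "is_multilinear_rep V f"]) (metis rep_exists rep_unique)


lemma key:
  assumes V: "finite V" and c: "is_multilinear_rep V f c" and SV: "S \<subseteq> V" and Sne: "S \<noteq> {}"
    and cS: "c S \<noteq> 0" and sup0: "\<And>R. S \<subset> R \<Longrightarrow> R \<subseteq> V \<Longrightarrow> c R = 0"
    and z: "z \<in> bool_inputs V"
  shows "\<exists>T\<subseteq>S. f (flip z T) \<noteq> f z"
proof (rule ccontr)
  assume "\<not> ?thesis"
  then have const: "\<And>T. T \<subseteq> S \<Longrightarrow> f (flip z T) = f z" by blast
  have fS: "finite S" using V SV finite_subset by blast
  let ?L = "(\<Sum>T\<in>Pow S. (-1)^card T * (of_bool (f (flip z T)) :: real))"
  have "?L = (\<Sum>T\<in>Pow S. (-1)^card T * (of_bool (f z) :: real))"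
    by (intro sum.cong refl) (simp add: const)
  also have "\<dots> = of_bool (f z) * (\<Sum>T\<in>Pow S. (-1)^card T * (\<Prod>j\<in>{}. of_bool (flip z T j) :: real))"
    by (simp add: sum_distrib_left mult.commute)
  also have "\<dots> = 0" using altsum[OF fS, of "{}" z] Sne by simp
  finally have L0: "?L = 0" .
  have fin: "finite (Pow V)" using V by simp
  have inp: "flip z T \<in> bool_inputs V" if "T \<subseteq> S" for T
    using z that SV by (auto simp: bool_inputs_def flip_def)
  have "?L = (\<Sum>T\<in>Pow S. (-1)^card T * (\<Sum>R\<in>Pow V. c R * (\<Prod>j\<in>R. of_bool (flip z T j))))"
    using c inp unfolding is_multilinear_rep_def by (intro sum.cong refl) auto
  also have "\<dots> = (\<Sum>R\<in>Pow V. c R * (\<Sum>T\<in>Pow S. (-1)^card T * (\<Prod>j\<in>R. of_bool (flip z T j))))"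
    by (simp add: sum_distrib_left sum.swap[of _ "Pow S"] algebra_simps)
  also have "\<dots> = (\<Sum>R\<in>Pow V. c R * (if S \<subseteq> R then (\<Prod>j\<in>S. if z j then 1 else -1) * (\<Prod>j\<in>R-S. of_bool (z j)) else 0))"
  proof (intro sum.cong refl)
    fix R assume "R \<in> Pow V"
    then have "finite R" using V finite_subset by auto
    then show "c R * (\<Sum>T\<in>Pow S. (-1)^card T * (\<Prod>j\<in>R. of_bool (flip z T j))) = c R * (if S \<subseteq> R then (\<Prod>j\<in>S. if z j then 1 else -1) * (\<Prod>j\<in>R-S. of_bool (z j)) else 0)"
      using altsum[OF fS] by simp
  qed
  also have "\<dots> = c S * (\<Prod>j\<in>S. if z j then 1 else -1)"
  proof -
    let ?g = "\<lambda>R. c R * (if S \<subseteq> R then (\<Prod>j\<in>S. if z j then 1 else -1) * (\<Prod>j\<in>R-S. of_bool (z j)) else (0::real))"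
    have "sum ?g (Pow V) = ?g S + sum ?g (Pow V - {S})"
      using fin SV by (simp add: sum.remove)
    also have "sum ?g (Pow V - {S}) = 0"
    proof (intro sum.neutral ballI)
      fix R assume R: "R \<in> Pow V - {S}"
      show "?g R = 0"
      proof (cases "S \<subseteq> R")
        case True
        then have "S \<subset> R" using R by auto
        then show ?thesis using sup0 R by auto
      qed simp
    qed
    finally show ?thesis by simp
  qed
  finally have "c S * (\<Prod>j\<in>S. if z j then 1 else -1 :: real) = 0" using L0 by simp
  moreover have "(\<Prod>j\<in>S. if z j then 1 else -1 :: real) \<noteq> 0"
    using fS by (simp add: prod_zero_iff)
  ultimately show False using cS by simp
qed

lemma bool_inputs_finite: "finite V \<Longrightarrow> finite (bool_inputs V)"
proof -
  assume V: "finite V"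
  have "bool_inputs V \<subseteq> (\<lambda>A j. j \<in> A) ` Pow V"
  proof
    fix x assume x: "x \<in> bool_inputs V"
    then have "x = (\<lambda>j. j \<in> {j\<in>V. x j})" by (auto simp: bool_inputs_def)
    then show "x \<in> (\<lambda>A j. j \<in> A) ` Pow V" by blast
  qed
  then show ?thesis using V finite_subset by blast
qed

definition wit :: "nat set \<Rightarrow> ((nat \<Rightarrow> bool) \<Rightarrow> bool) \<Rightarrow> (nat \<Rightarrow> bool) \<Rightarrow> nat \<Rightarrow> bool" where
  "wit V f x b \<longleftrightarrow> (\<exists>B :: nat \<Rightarrow> nat set.
      (\<forall>i<b. B i \<subseteq> V \<and> f (flip x (B i)) \<noteq> f x) \<and>
      (\<forall>i<b. \<forall>k<b. i \<noteq> k \<longrightarrow> B i \<inter> B k = {}))"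

lemma bs_at_alt: "bs_at V f x = Max {b. wit V f x b}"
  unfolding bs_at_def wit_def by simp

lemma wit_le: assumes V: "finite V" and w: "wit V f x b" shows "b \<le> card V"
proof -
  obtain B where B: "\<forall>i<b. B i \<subseteq> V \<and> f (flip x (B i)) \<noteq> f x"
    "\<forall>i<b. \<forall>k<b. i \<noteq> k \<longrightarrow> B i \<inter> B k = {}" using w unfolding wit_def by blast
  have ne: "B i \<noteq> {}" if "i < b" for i
  proof
    assume "B i = {}"
    then have "flip x (B i) = x" by (simp add: flip_def)
    then show False using B that by auto
  qed
  define g where "g i = (SOME j. j \<in> B i)" for i
  have g: "g i \<in> B i" if "i < b" for i
    using ne[OF that] unfolding g_def by (simp add: some_in_eq)
  have "inj_on g {..<b}"
  proof (rule inj_onI)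
    fix i k assume "i \<in> {..<b}" "k \<in> {..<b}" "g i = g k"
    then show "i = k" using g B(2) by (metis disjoint_iff lessThan_iff)
  qed
  moreover have "g ` {..<b} \<subseteq> V" using g B(1) by auto
  ultimately have "card {..<b} \<le> card V" using V card_inj_on_le by blast
  then show ?thesis by simp
qed

lemma wit_fin: "finite V \<Longrightarrow> finite {b. wit V f x b}"
  using wit_le by (metis (no_types, lifting) finite_nat_set_iff_bounded_le mem_Collect_eq)

lemma wit0: "wit V f x 0" unfolding wit_def by simp

lemma bs_at_ge: "finite V \<Longrightarrow> wit V f x b \<Longrightarrow> b \<le> bs_at V f x"
  unfolding bs_at_alt by (rule Max_ge) (auto simp: wit_fin)

lemma bs_at_wit: "finite V \<Longrightarrow> wit V f x (bs_at V f x)"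
  unfolding bs_at_alt using Max_in[OF wit_fin, of V f x] wit0[of V f x] by auto

lemma bs_ge: "finite V \<Longrightarrow> x \<in> bool_inputs V \<Longrightarrow> bs_at V f x \<le> bs V f"
  unfolding bs_def by (rule Max_ge) (auto simp: bool_inputs_finite)

lemma bs_wit: "finite V \<Longrightarrow> \<exists>x\<in>bool_inputs V. bs V f = bs_at V f x"
proof -
  assume V: "finite V"
  have "(\<lambda>_. False) \<in> bool_inputs V" by (simp add: bool_inputs_def)
  then have "bs V f \<in> bs_at V f ` bool_inputs V"
    unfolding bs_def using V by (intro Max_in) (auto simp: bool_inputs_finite)
  then show ?thesis by auto
qed


theorem proposition5:
  fixes n l :: nat and f :: "(nat \<Rightarrow> bool) \<Rightarrow> bool" and Ms :: "nat \<Rightarrow> nat set"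
  assumes deg_pos: "bf_degree {..<n} f \<ge> 1"
    and sub: "\<And>i. i < l \<Longrightarrow> Ms i \<subseteq> {..<n}"
    and disj: "\<And>i k. i < l \<Longrightarrow> k < l \<Longrightarrow> i \<noteq> k \<Longrightarrow> Ms i \<inter> Ms k = {}"
    and mono: "\<And>i. i < l \<Longrightarrow> ml_coeff {..<n} f (Ms i) \<noteq> 0"
    and card: "\<And>i. i < l \<Longrightarrow> card (Ms i) = bf_degree {..<n} f"
  shows "(\<forall>\<alpha> :: nat \<Rightarrow> bool.
           bs ({..<n} - (\<Union>i<l. Ms i)) (restrict_bf f (\<Union>i<l. Ms i) \<alpha>)
             \<le> bs {..<n} f - l)
         \<and> l \<le> bs {..<n} f"
proof -
  define V where "V = {..<n::nat}"
  define M where "M = (\<Union>i<l. Ms i)"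
  define c where "c = ml_coeff V f"
  define d where "d = bf_degree V f"
  have V: "finite V" unfolding V_def by simp
  have rep: "is_multilinear_rep V f c" unfolding c_def using ml_coeff_rep[OF V] .
  have MV: "M \<subseteq> V" unfolding M_def V_def using sub by auto
  have degmax: "card R \<le> d" if "R \<subseteq> V" "c R \<noteq> 0" for R
  proof -
    have "{card S | S. S \<subseteq> V \<and> ml_coeff V f S \<noteq> 0} \<subseteq> card ` Pow V" by auto
    then have "finite (insert 0 {card S | S. S \<subseteq> V \<and> ml_coeff V f S \<noteq> 0})"
      using V finite_subset by blast
    then show ?thesis unfolding d_def bf_degree_def using that c_def
      by (intro Max_ge) auto
  qed
  have main: "bs (V - M) (restrict_bf f M \<alpha>) + l \<le> bs V f" for \<alpha>
  proof -
    let ?g = "restrict_bf f M \<alpha>"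
    have VM: "finite (V - M)" using V by simp
    obtain x' where x': "x' \<in> bool_inputs (V - M)" and bx: "bs (V - M) ?g = bs_at (V - M) ?g x'"
      using bs_wit[OF VM] by blast
    define b where "b = bs_at (V - M) ?g x'"
    obtain B where B: "\<forall>i<b. B i \<subseteq> V - M \<and> ?g (flip x' (B i)) \<noteq> ?g x'"
      "\<forall>i<b. \<forall>k<b. i \<noteq> k \<longrightarrow> B i \<inter> B k = {}"
      using bs_at_wit[OF VM, of ?g x'] unfolding b_def wit_def by blast
    define z where "z = (\<lambda>j. if j \<in> M then \<alpha> j else x' j)"
    have z: "z \<in> bool_inputs V" using x' MV unfolding z_def bool_inputs_def by auto
    have gz: "?g x' = f z" unfolding restrict_bf_def z_def by simp
    have ex: "\<exists>T. T \<subseteq> Ms i \<and> f (flip z T) \<noteq> f z" if i: "i < l" for i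
    proof -
      have MsV: "Ms i \<subseteq> V" using sub i V_def by auto
      have "Ms i \<noteq> {}" using card[OF i] deg_pos by (auto simp: V_def)
      moreover have "c (Ms i) \<noteq> 0" using mono[OF i] by (simp add: c_def V_def)
      moreover have "c R = 0" if "Ms i \<subset> R" "R \<subseteq> V" for R
      proof (rule ccontr)
        assume "c R \<noteq> 0"
        then have "card R \<le> d" using degmax that by blast
        moreover have "card (Ms i) < card R" using that V finite_subset psubset_card_mono by metis
        ultimately show False using card[OF i] by (simp add: d_def V_def)
      qed
      ultimately show ?thesis using key[OF V rep MsV _ _ _ z] by blast
    qed
    then obtain T where T: "\<And>i. i < l \<Longrightarrow> T i \<subseteq> Ms i \<and> f (flip z (T i)) \<noteq> f z"
      by metis
    define B' where "B' k = (if k < b then B k else T (k - b))" for k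
    have TM: "T i \<subseteq> M" if "i < l" for i using T[OF that] that unfolding M_def by auto
    have "wit V f z (b + l)"
      unfolding wit_def
    proof (intro exI[of _ B'] conjI; intro allI impI)
      fix i assume i: "i < b + l"
      show "B' i \<subseteq> V \<and> f (flip z (B' i)) \<noteq> f z"
      proof (cases "i < b")
        case True
        have "flip z (B i) = (\<lambda>j. if j \<in> M then \<alpha> j else flip x' (B i) j)"
          using B(1) True unfolding z_def flip_def by (auto intro!: ext)
        then have "f (flip z (B i)) = ?g (flip x' (B i))" unfolding restrict_bf_def by simp
        then show ?thesis using B(1) True gz unfolding B'_def by auto
      next
        case False
        then have "i - b < l" using i by auto
        then show ?thesis using T[of "i - b"] False sub[of "i - b"] unfolding B'_def V_def by auto
      qed
    next
      fix i k assume i: "i < b + l" and k: "k < b + l" and ik: "i \<noteq> k"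
      show "B' i \<inter> B' k = {}"
      proof (cases "i < b")
        case iT: True
        show ?thesis
        proof (cases "k < b")
          case True then show ?thesis using B(2) ik iT unfolding B'_def by auto
        next
          case False
          then have "k - b < l" using k by arith
          then have "T (k - b) \<subseteq> M" by (rule TM)
          then show ?thesis using B(1) iT False unfolding B'_def by auto
        qed
      next
        case iF: False
        show ?thesis
        proof (cases "k < b")
          case True
          have "i - b < l" using i iF by arith
          then have "T (i - b) \<subseteq> M" by (rule TM)
          then show ?thesis using B(1) iF True unfolding B'_def by auto
        next
          case False
          then have "i - b \<noteq> k - b" "i - b < l" "k - b < l" using ik i k iF by auto
          moreover have "B' i = T (i - b)" "B' k = T (k - b)" using iF False unfolding B'_def by auto
          ultimately show ?thesis using T[of "i - b"] T[of "k - b"] disj[of "i - b" "k - b"] by blast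
        qed
      qed
    qed
    then have "b + l \<le> bs_at V f z" using bs_at_ge[OF V] by blast
    also have "\<dots> \<le> bs V f" using bs_ge[OF V z] .
    finally show ?thesis using bx b_def by simp
  qed
  show ?thesis
  proof
    show "\<forall>\<alpha>. bs ({..<n} - (\<Union>i<l. Ms i)) (restrict_bf f (\<Union>i<l. Ms i) \<alpha>) \<le> bs {..<n} f - l"
      using main unfolding V_def M_def by (metis le_diff_conv2 add_leD2 le_add1 le_trans)
    show "l \<le> bs {..<n} f" using main[of undefined] unfolding V_def by simp
  qed
qed

end
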